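(* Let $T=(T,\eta,\mu)$ be a Kock–Zöberlein monad on a poset-enriched category $\mathcal{A}$, let $a\colon T(X)\to X$ be a $T$-algebra, and let $c\colon X\to T(X)$ be a map of algebras from $a$ to $\overline{T}(a)=\mu_X$ (i.e. $c\circ a=\mu_X\circ T(c)$). The following are equivalent: (1) $c$ is an Eilenberg–Moore coalgebra of the comonad $\overline{T}$ on $a$ (i.e. additionally $a\circ c=\mathrm{id}_X$ and $T(\eta_X)\circ c=T(c)\circ c$); (2) $a\circ c=\mathrm{id}_X$ and $c\circ a\le\mathrm{id}_{T(X)}$, i.e. $c$ is a left adjoint right inverse of the counit $a$ (a coreflection $c\dashv a$).
   Context: A poset-enriched category has hom-posets with monotone composition; $f\dashv g$ means $\mathrm{id}\le g\circ f$ and $f\circ g\le\mathrm{id}$. A monad $T$ is Kock–Zöberlein if it is monotone on hom-posets and $T(\eta_X)\le\eta_{T(X)}$ for all $X$. $\overline{T}$ is the comonad on the category of $T$-algebras (also poset-enriched) induced by the free-algebra adjunction: $\overline{T}(a)=\mu_X\colon T^2X\to TX$ for $a\colon TX\to X$, with counit $a\colon\overline{T}(a)\to a$ and comultiplication $T(\eta_X)$. *)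

theory Defs
  imports Main
begin

locale poset_cat =
  fixes Obj :: "'o set"
    and hom :: "'o \<Rightarrow> 'o \<Rightarrow> 'a set"
    and cmp :: "'a \<Rightarrow> 'a \<Rightarrow> 'a"
    and idt :: "'o \<Rightarrow> 'a"
    and le  :: "'a \<Rightarrow> 'a \<Rightarrow> bool"
  assumes idt_hom: "X \<in> Obj \<Longrightarrow> idt X \<in> hom X X"
    and cmp_hom: "\<lbrakk>X \<in> Obj; Y \<in> Obj; Z \<in> Obj; f \<in> hom X Y; g \<in> hom Y Z\<rbrakk>
                  \<Longrightarrow> cmp g f \<in> hom X Z"
    and idt_left: "\<lbrakk>X \<in> Obj; Y \<in> Obj; f \<in> hom X Y\<rbrakk> \<Longrightarrow> cmp (idt Y) f = f"
    and idt_right: "\<lbrakk>X \<in> Obj; Y \<in> Obj; f \<in> hom X Y\<rbrakk> \<Longrightarrow> cmp f (idt X) = f"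
    and cmp_assoc: "\<lbrakk>W \<in> Obj; X \<in> Obj; Y \<in> Obj; Z \<in> Obj;
                     f \<in> hom W X; g \<in> hom X Y; h \<in> hom Y Z\<rbrakk>
                    \<Longrightarrow> cmp h (cmp g f) = cmp (cmp h g) f"
    and le_refl: "\<lbrakk>X \<in> Obj; Y \<in> Obj; f \<in> hom X Y\<rbrakk> \<Longrightarrow> le f f"
    and le_trans: "\<lbrakk>X \<in> Obj; Y \<in> Obj; f \<in> hom X Y; g \<in> hom X Y; h \<in> hom X Y;
                    le f g; le g h\<rbrakk> \<Longrightarrow> le f h"
    and le_antisym: "\<lbrakk>X \<in> Obj; Y \<in> Obj; f \<in> hom X Y; g \<in> hom X Y;
                      le f g; le g f\<rbrakk> \<Longrightarrow> f = g"
    and cmp_mono: "\<lbrakk>X \<in> Obj; Y \<in> Obj; Z \<in> Obj; f \<in> hom X Y; f' \<in> hom X Y;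
                    g \<in> hom Y Z; g' \<in> hom Y Z; le f f'; le g g'\<rbrakk>
                   \<Longrightarrow> le (cmp g f) (cmp g' f')"

locale pc_monad = poset_cat Obj hom cmp idt le
  for Obj :: "'o set"
    and hom :: "'o \<Rightarrow> 'o \<Rightarrow> 'a set"
    and cmp :: "'a \<Rightarrow> 'a \<Rightarrow> 'a"
    and idt :: "'o \<Rightarrow> 'a"
    and le  :: "'a \<Rightarrow> 'a \<Rightarrow> bool" +
  fixes TO :: "'o \<Rightarrow> 'o"
    and TA :: "'a \<Rightarrow> 'a"
    and eta :: "'o \<Rightarrow> 'a"
    and mu :: "'o \<Rightarrow> 'a"
  assumes TO_Obj: "X \<in> Obj \<Longrightarrow> TO X \<in> Obj"
    and TA_hom: "\<lbrakk>X \<in> Obj; Y \<in> Obj; f \<in> hom X Y\<rbrakk> \<Longrightarrow> TA f \<in> hom (TO X) (TO Y)"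
    and TA_idt: "X \<in> Obj \<Longrightarrow> TA (idt X) = idt (TO X)"
    and TA_cmp: "\<lbrakk>X \<in> Obj; Y \<in> Obj; Z \<in> Obj; f \<in> hom X Y; g \<in> hom Y Z\<rbrakk>
                 \<Longrightarrow> TA (cmp g f) = cmp (TA g) (TA f)"
    and eta_hom: "X \<in> Obj \<Longrightarrow> eta X \<in> hom X (TO X)"
    and eta_nat: "\<lbrakk>X \<in> Obj; Y \<in> Obj; f \<in> hom X Y\<rbrakk>
                  \<Longrightarrow> cmp (TA f) (eta X) = cmp (eta Y) f"
    and mu_hom: "X \<in> Obj \<Longrightarrow> mu X \<in> hom (TO (TO X)) (TO X)"
    and mu_nat: "\<lbrakk>X \<in> Obj; Y \<in> Obj; f \<in> hom X Y\<rbrakk>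
                 \<Longrightarrow> cmp (TA f) (mu X) = cmp (mu Y) (TA (TA f))"
    and mu_eta_T: "X \<in> Obj \<Longrightarrow> cmp (mu X) (eta (TO X)) = idt (TO X)"
    and mu_T_eta: "X \<in> Obj \<Longrightarrow> cmp (mu X) (TA (eta X)) = idt (TO X)"
    and mu_assoc: "X \<in> Obj \<Longrightarrow> cmp (mu X) (mu (TO X)) = cmp (mu X) (TA (mu X))"

locale KZ_monad = pc_monad Obj hom cmp idt le TO TA eta mu
  for Obj :: "'o set"
    and hom :: "'o \<Rightarrow> 'o \<Rightarrow> 'a set"
    and cmp :: "'a \<Rightarrow> 'a \<Rightarrow> 'a"
    and idt :: "'o \<Rightarrow> 'a"
    and le  :: "'a \<Rightarrow> 'a \<Rightarrow> bool"
    and TO :: "'o \<Rightarrow> 'o"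
    and TA :: "'a \<Rightarrow> 'a"
    and eta :: "'o \<Rightarrow> 'a"
    and mu :: "'o \<Rightarrow> 'a" +
  assumes TA_mono: "\<lbrakk>X \<in> Obj; Y \<in> Obj; f \<in> hom X Y; g \<in> hom X Y; le f g\<rbrakk>
                    \<Longrightarrow> le (TA f) (TA g)"
    and KZ: "X \<in> Obj \<Longrightarrow> le (TA (eta X)) (eta (TO X))"

definition T_algebra where
  "T_algebra Obj hom cmp idt TO TA eta mu X a \<longleftrightarrow>
     X \<in> Obj \<and> a \<in> hom (TO X) X \<and> cmp a (eta X) = idt X \<and> cmp a (mu X) = cmp a (TA a)"

end

theory Submission
  imports Defs
begin

theorem theorem4p2:
  assumes kz: "KZ_monad Obj hom cmp idt le TO TA eta mu"
    and alg: "T_algebra Obj hom cmp idt TO TA eta mu X a"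
    and c_hom: "c \<in> hom X (TO X)"
    and c_alg_map: "cmp c a = cmp (mu X) (TA c)"
  shows "(cmp a c = idt X \<and> cmp (TA (eta X)) c = cmp (TA c) c)
         \<longleftrightarrow> (cmp a c = idt X \<and> le (cmp c a) (idt (TO X)))"
proof -
  interpret K: KZ_monad Obj hom cmp idt le TO TA eta mu by (rule kz)
  from alg have X: "X \<in> Obj" and a_hom: "a \<in> hom (TO X) X"
    and a_eta: "cmp a (eta X) = idt X" by (auto simp: T_algebra_def)
  have TX: "TO X \<in> Obj" using X K.TO_Obj by blast
  have TTX: "TO (TO X) \<in> Obj" using TX K.TO_Obj by blast
  have e: "eta X \<in> hom X (TO X)" using K.eta_hom X by blast
  have eT: "eta (TO X) \<in> hom (TO X) (TO (TO X))" using K.eta_hom TX by blast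
  have Te: "TA (eta X) \<in> hom (TO X) (TO (TO X))" using K.TA_hom[OF X TX e] .
  have Ta: "TA a \<in> hom (TO (TO X)) (TO X)" using K.TA_hom[OF TX X a_hom] .
  have Tc: "TA c \<in> hom (TO X) (TO (TO X))" using K.TA_hom[OF X TX c_hom] .
  have m: "mu X \<in> hom (TO (TO X)) (TO X)" using K.mu_hom X by blast
  have TTe: "TA (TA (eta X)) \<in> hom (TO (TO X)) (TO (TO (TO X)))"
    using K.TA_hom[OF TX TTX Te] .
  have TeT: "TA (eta (TO X)) \<in> hom (TO (TO X)) (TO (TO (TO X)))"
    using K.TA_hom[OF TX TTX eT] .
  have TTTX: "TO (TO (TO X)) \<in> Obj" using TTX K.TO_Obj by blast
  have mT: "mu (TO X) \<in> hom (TO (TO (TO X))) (TO (TO X))" using K.mu_hom TX by blast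
  have ea: "cmp (eta X) a \<in> hom (TO X) (TO X)" using K.cmp_hom[OF TX X TX a_hom e] .
  have L1: "le (idt (TO X)) (cmp (eta X) a)"
  proof -
    have "cmp (eta X) a = cmp (TA a) (eta (TO X))" using K.eta_nat[OF TX X a_hom] by simp
    moreover have "le (cmp (TA a) (TA (eta X))) (cmp (TA a) (eta (TO X)))"
      by (rule K.cmp_mono[OF TX TTX TX Te eT Ta Ta K.KZ[OF X] K.le_refl[OF TTX TX Ta]])
    moreover have "cmp (TA a) (TA (eta X)) = idt (TO X)"
      using K.TA_cmp[OF X TX X e a_hom, symmetric] a_eta K.TA_idt[OF X] by simp
    ultimately show ?thesis by simp
  qed
  have L2: "le (cmp (TA (eta X)) (mu X)) (idt (TO (TO X)))"
  proof -
    have "cmp (TA (eta X)) (mu X) = cmp (mu (TO X)) (TA (TA (eta X)))"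
      using K.mu_nat[OF X TX e] .
    moreover have "le (cmp (mu (TO X)) (TA (TA (eta X)))) (cmp (mu (TO X)) (TA (eta (TO X))))"
      by (rule K.cmp_mono[OF TTX TTTX TTX TTe TeT mT mT K.TA_mono[OF TX TTX Te eT K.KZ[OF X]]
            K.le_refl[OF TTTX TTX mT]])
    moreover have "cmp (mu (TO X)) (TA (eta (TO X))) = idt (TO (TO X))"
      using K.mu_T_eta[OF TX] .
    ultimately show ?thesis by simp
  qed
  have cle: "le c (eta X)" if ac: "cmp a c = idt X"
  proof -
    have "le (cmp (idt (TO X)) c) (cmp (cmp (eta X) a) c)"
      by (rule K.cmp_mono[OF X TX TX c_hom c_hom K.idt_hom[OF TX] ea K.le_refl[OF X TX c_hom] L1])
    moreover have "cmp (idt (TO X)) c = c" using K.idt_left[OF X TX c_hom] .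
    moreover have "cmp (cmp (eta X) a) c = eta X"
      using K.cmp_assoc[OF X TX X TX c_hom a_hom e, symmetric] ac K.idt_right[OF X TX e] by simp
    ultimately show ?thesis by simp
  qed
  show ?thesis
  proof
    assume H: "cmp a c = idt X \<and> cmp (TA (eta X)) c = cmp (TA c) c"
    have "le (cmp (mu X) (TA c)) (cmp (mu X) (TA (eta X)))"
      by (rule K.cmp_mono[OF TX TTX TX Tc Te m m K.TA_mono[OF X TX c_hom e cle[OF conjunct1[OF H]]]
            K.le_refl[OF TTX TX m]])
    then show "cmp a c = idt X \<and> le (cmp c a) (idt (TO X))"
      using H c_alg_map K.mu_T_eta[OF X] by simp
  next
    assume H: "cmp a c = idt X \<and> le (cmp c a) (idt (TO X))"
    have ac: "cmp a c = idt X" using H by simp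
    have TcC: "cmp (TA c) c \<in> hom X (TO (TO X))" using K.cmp_hom[OF X TX TTX c_hom Tc] .
    have TeC: "cmp (TA (eta X)) c \<in> hom X (TO (TO X))" using K.cmp_hom[OF X TX TTX c_hom Te] .
    have TeM: "cmp (TA (eta X)) (mu X) \<in> hom (TO (TO X)) (TO (TO X))"
      using K.cmp_hom[OF TTX TX TTX m Te] .
    have A: "le (cmp (TA c) c) (cmp (TA (eta X)) c)"
      by (rule K.cmp_mono[OF X TX TTX c_hom c_hom Tc Te K.le_refl[OF X TX c_hom]
            K.TA_mono[OF X TX c_hom e cle[OF ac]]])
    have eq1: "cmp (TA (eta X)) c = cmp (cmp (TA (eta X)) (mu X)) (cmp (TA c) c)"
    proof -
      have "cmp (TA (eta X)) c = cmp (TA (eta X)) (cmp (cmp c a) c)"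
        using K.cmp_assoc[OF X TX X TX c_hom a_hom c_hom] ac K.idt_right[OF X TX c_hom] by simp
      also have "\<dots> = cmp (TA (eta X)) (cmp (cmp (mu X) (TA c)) c)" using c_alg_map by simp
      also have "\<dots> = cmp (TA (eta X)) (cmp (mu X) (cmp (TA c) c))"
        using K.cmp_assoc[OF X TX TTX TX c_hom Tc m] by simp
      also have "\<dots> = cmp (cmp (TA (eta X)) (mu X)) (cmp (TA c) c)"
        using K.cmp_assoc[OF X TTX TX TTX TcC m Te] by simp
      finally show ?thesis .
    qed
    have B: "le (cmp (TA (eta X)) c) (cmp (TA c) c)"
    proof -
      have "le (cmp (cmp (TA (eta X)) (mu X)) (cmp (TA c) c)) (cmp (idt (TO (TO X))) (cmp (TA c) c))"
        by (rule K.cmp_mono[OF X TTX TTX TcC TcC TeM K.idt_hom[OF TTX] K.le_refl[OF X TTX TcC] L2])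
      then show ?thesis using eq1 K.idt_left[OF X TTX TcC] by simp
    qed
    show "cmp a c = idt X \<and> cmp (TA (eta X)) c = cmp (TA c) c"
      using ac K.le_antisym[OF X TTX TeC TcC B A] by simp
  qed
qed

end
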